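(* Let $n$ be a positive integer. If $n \equiv 1 \pmod 3$, then $n \leq \operatorname{adim}(P_3 \square P_n) \leq n+1$. Otherwise, $n-1 \leq \operatorname{adim}(P_3 \square P_n) \leq n$.
   Context: All graphs are finite, simple and undirected. $P_n$ is the path on $n$ vertices and $\square$ is the Cartesian product of graphs: $V(G_1\square G_2)=V(G_1)\times V(G_2)$, and $(u,u')$ is adjacent to $(v,v')$ iff either $u=v$ and $u'v'\in E(G_2)$, or $u'=v'$ and $uv\in E(G_1)$. For a graph $G$, $d(u,v)$ is the shortest-path distance ($\infty$ if $u,v$ lie in different components), and $d_1(u,v)=\min(d(u,v),2)$. A set $A\subseteq V(G)$ is an adjacency resolving set if for all distinct $x,y\in V(G)$ there is $z\in A$ with $d_1(z,x)\neq d_1(z,y)$. The adjacency dimension $\operatorname{adim}(G)$ is the minimum cardinality of an adjacency resolving set. *)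

theory Defs
  imports Main "HOL-Library.Extended_Nat"
begin

text \<open>A finite simple graph is given by a vertex set V and a symmetric irreflexive
adjacency relation E (only pairs in V are relevant).\<close>

definition path_graph :: "nat \<Rightarrow> nat set" where
  "path_graph n = {0..<n}"

definition path_adj :: "nat \<Rightarrow> nat \<Rightarrow> bool" where
  "path_adj u v \<longleftrightarrow> u = v + 1 \<or> v = u + 1"

definition cart_adj :: "('a \<Rightarrow> 'a \<Rightarrow> bool) \<Rightarrow> ('b \<Rightarrow> 'b \<Rightarrow> bool) \<Rightarrow> ('a \<times> 'b) \<Rightarrow> ('a \<times> 'b) \<Rightarrow> bool" where
  "cart_adj E1 E2 x y \<longleftrightarrow>
     (fst x = fst y \<and> E2 (snd x) (snd y)) \<or> (snd x = snd y \<and> E1 (fst x) (fst y))"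

definition is_walk :: "'a set \<Rightarrow> ('a \<Rightarrow> 'a \<Rightarrow> bool) \<Rightarrow> 'a list \<Rightarrow> bool" where
  "is_walk V E ps \<longleftrightarrow> ps \<noteq> [] \<and> set ps \<subseteq> V \<and> (\<forall>i < length ps - 1. E (ps ! i) (ps ! Suc i))"

definition dist :: "'a set \<Rightarrow> ('a \<Rightarrow> 'a \<Rightarrow> bool) \<Rightarrow> 'a \<Rightarrow> 'a \<Rightarrow> enat" where
  "dist V E u v = (if \<exists>ps. is_walk V E ps \<and> hd ps = u \<and> last ps = v
     then enat (LEAST k. \<exists>ps. is_walk V E ps \<and> hd ps = u \<and> last ps = v \<and> length ps = Suc k)
     else \<infinity>)"

definition dist1 :: "'a set \<Rightarrow> ('a \<Rightarrow> 'a \<Rightarrow> bool) \<Rightarrow> 'a \<Rightarrow> 'a \<Rightarrow> enat" where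
  "dist1 V E u v = min (dist V E u v) 2"

definition adj_resolving :: "'a set \<Rightarrow> ('a \<Rightarrow> 'a \<Rightarrow> bool) \<Rightarrow> 'a set \<Rightarrow> bool" where
  "adj_resolving V E A \<longleftrightarrow> A \<subseteq> V \<and>
     (\<forall>x\<in>V. \<forall>y\<in>V. x \<noteq> y \<longrightarrow> (\<exists>z\<in>A. dist1 V E z x \<noteq> dist1 V E z y))"

definition adim :: "'a set \<Rightarrow> ('a \<Rightarrow> 'a \<Rightarrow> bool) \<Rightarrow> nat" where
  "adim V E = (LEAST k. \<exists>A. adj_resolving V E A \<and> card A = k)"

definition grid_V :: "nat \<Rightarrow> (nat \<times> nat) set" where
  "grid_V n = path_graph 3 \<times> path_graph n"

definition grid_E :: "(nat \<times> nat) \<Rightarrow> (nat \<times> nat) \<Rightarrow> bool" where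
  "grid_E = cart_adj path_adj path_adj"

end

theory Submission
  imports Defs
begin

lemma walk_single: "u \<in> V \<Longrightarrow> is_walk V E [u]" by (simp add: is_walk_def)
lemma walk_two: "u\<in>V \<Longrightarrow> v\<in>V \<Longrightarrow> E u v \<Longrightarrow> is_walk V E [u,v]"
  by (auto simp: is_walk_def less_Suc_eq)

lemma walk_len1: "length ps = Suc 0 \<Longrightarrow> hd ps = last ps"
  by (cases ps) auto

lemma walk_len2: "is_walk V E ps \<Longrightarrow> length ps = Suc (Suc 0) \<Longrightarrow> E (hd ps) (last ps)"
proof -
  assume w: "is_walk V E ps" and l: "length ps = Suc (Suc 0)"
  then obtain a b where "ps = [a,b]"
    by (metis length_0_conv length_Suc_conv)
  with w show ?thesis by (auto simp: is_walk_def)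
qed

lemma dist_self: "u \<in> V \<Longrightarrow> dist V E u u = 0"
proof -
  assume u: "u \<in> V"
  have ex: "\<exists>ps. is_walk V E ps \<and> hd ps = u \<and> last ps = u \<and> length ps = Suc 0"
    using walk_single[of u V E, OF u] by (intro exI[of _ "[u]"]) auto
  hence "(LEAST k. \<exists>ps. is_walk V E ps \<and> hd ps = u \<and> last ps = u \<and> length ps = Suc k) = 0"
    by (intro Least_eq_0) 
  thus ?thesis using ex unfolding dist_def by (auto simp: zero_enat_def)
qed

lemma dist_adj: "u \<in> V \<Longrightarrow> v \<in> V \<Longrightarrow> u \<noteq> v \<Longrightarrow> E u v \<Longrightarrow> dist V E u v = 1"
proof -
  assume u: "u \<in> V" and v: "v \<in> V" and ne: "u \<noteq> v" and e: "E u v"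
  have ex: "\<exists>ps. is_walk V E ps \<and> hd ps = u \<and> last ps = v \<and> length ps = Suc 1"
    using walk_two[of u V v E, OF u v e] by (intro exI[of _ "[u,v]"]) auto
  have "(LEAST k. \<exists>ps. is_walk V E ps \<and> hd ps = u \<and> last ps = v \<and> length ps = Suc k) = 1"
  proof (rule Least_equality)
    show "\<exists>ps. is_walk V E ps \<and> hd ps = u \<and> last ps = v \<and> length ps = Suc 1" by fact
  next
    fix k assume "\<exists>ps. is_walk V E ps \<and> hd ps = u \<and> last ps = v \<and> length ps = Suc k"
    then obtain ps where "hd ps = u" "last ps = v" "length ps = Suc k" by blast
    thus "1 \<le> k" using ne walk_len1[of ps] by (cases k) auto
  qed
  thus ?thesis using ex unfolding dist_def by (auto simp: one_enat_def)
qed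

lemma dist_far: "u \<noteq> v \<Longrightarrow> \<not> E u v \<Longrightarrow> dist V E u v \<ge> 2"
proof -
  assume ne: "u \<noteq> v" and e: "\<not> E u v"
  show ?thesis
  proof (cases "\<exists>ps. is_walk V E ps \<and> hd ps = u \<and> last ps = v")
    case False
    have "dist V E u v = \<infinity>" unfolding dist_def by (rule if_not_P[OF False])
    thus ?thesis by simp
  next
    case True
    let ?P = "\<lambda>k. \<exists>ps. is_walk V E ps \<and> hd ps = u \<and> last ps = v \<and> length ps = Suc k"
    from True obtain ps where ps: "is_walk V E ps" "hd ps = u" "last ps = v" by blast
    hence "?P (length ps - 1)" by (metis Suc_diff_1 is_walk_def length_greater_0_conv)
    hence P: "?P (Least ?P)" by (rule LeastI)
    then obtain qs where qs: "is_walk V E qs" "hd qs = u" "last qs = v" "length qs = Suc (Least ?P)" by blast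
    have "Least ?P \<ge> 2"
    proof (rule ccontr)
      assume "\<not> Least ?P \<ge> 2"
      hence "Least ?P = 0 \<or> Least ?P = 1" by auto
      thus False
      proof
        assume "Least ?P = 0" thus False using qs ne walk_len1[of qs] by auto
      next
        assume "Least ?P = 1" thus False using qs e walk_len2[of V E qs] by auto
      qed
    qed
    thus ?thesis using True unfolding dist_def
      by (simp add: numeral_eq_enat)
  qed
qed

definition cls :: "('a \<Rightarrow> 'a \<Rightarrow> bool) \<Rightarrow> 'a \<Rightarrow> 'a \<Rightarrow> enat" where
  "cls E z x = (if z = x then 0 else if E z x then 1 else 2)"

lemma dist1_cls: "u \<in> V \<Longrightarrow> v \<in> V \<Longrightarrow> dist1 V E u v = cls E u v"
proof -
  assume u: "u \<in> V" and v: "v \<in> V"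
  show ?thesis
  proof (cases "u = v")
    case True thus ?thesis using dist_self[of u V E, OF u] by (simp add: dist1_def cls_def)
  next
    case False
    show ?thesis
    proof (cases "E u v")
      case True thus ?thesis using dist_adj[of u V v E, OF u v False True] False
        by (simp add: dist1_def cls_def min_def)
    next
      case f2: False
      have "dist V E u v \<ge> 2" using dist_far[of u v E V, OF False f2] .
      thus ?thesis using False f2 by (simp add: dist1_def cls_def min_def)
    qed
  qed
qed

lemma resolving_iff:
  "adj_resolving V E A \<longleftrightarrow> A \<subseteq> V \<and> (\<forall>x\<in>V. \<forall>y\<in>V. x \<noteq> y \<longrightarrow> (\<exists>z\<in>A. cls E z x \<noteq> cls E z y))"
  unfolding adj_resolving_def
  by (metis (no_types, lifting) dist1_cls subsetD)

lemma gridE_iff: "grid_E (a,b) (x,y) \<longleftrightarrow> (a = x \<and> (b = Suc y \<or> y = Suc b)) \<or> (b = y \<and> (a = Suc x \<or> x = Suc a))"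
  by (auto simp: grid_E_def cart_adj_def path_adj_def)

lemma gridE_sym: "grid_E u v = grid_E v u"
  by (auto simp: grid_E_def cart_adj_def path_adj_def)

lemma gridE_irrefl: "\<not> grid_E v v"
  by (auto simp: grid_E_def cart_adj_def path_adj_def)

lemma grid_V_iff: "(x,y) \<in> grid_V n \<longleftrightarrow> x < 3 \<and> y < n"
  by (auto simp: grid_V_def path_graph_def)

lemma resolving_distinct:
  assumes "adj_resolving (grid_V n) grid_E A" "u \<in> grid_V n - A" "v \<in> grid_V n - A" "u \<noteq> v"
  shows "\<exists>z\<in>A. grid_E z u \<noteq> grid_E z v"
proof -
  from assms(1) have "\<exists>z\<in>A. cls grid_E z u \<noteq> cls grid_E z v"
    using assms(2-4) unfolding resolving_iff by blast
  then obtain z where z: "z \<in> A" "cls grid_E z u \<noteq> cls grid_E z v" by blast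
  hence "z \<noteq> u" "z \<noteq> v" using assms(2,3) by auto
  thus ?thesis using z by (intro bexI[of _ z]) (auto simp: cls_def split: if_splits)
qed

definition tok :: "(nat\<times>nat) set \<Rightarrow> nat\<times>nat \<Rightarrow> nat\<times>nat \<Rightarrow> nat" where
"tok A v a = (let x = fst v; y = snd v in
  if x = 1 then
     (if a = (0,y) then (if (0,y)\<in>A then (if (2,y)\<in>A then 1 else 2) else 0)
      else if a = (2,y) then (if (2,y)\<in>A then (if (0,y)\<in>A then 1 else 2) else 0)
      else if 0<y \<and> a = (1,y-1) then (if (1,y-1)\<in>A \<and> (0,y)\<notin>A \<and> (2,y)\<notin>A then (if (1,y+1)\<in>A then 1 else 2) else 0)
      else if a = (1,y+1) then (if (1,y+1)\<in>A \<and> (0,y)\<notin>A \<and> (2,y)\<notin>A then (if 0<y \<and> (1,y-1)\<in>A then 1 else 2) else 0)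
      else 0)
  else if x = 0 \<or> x = 2 then
     (if a = (1,y) then (if (1,y)\<in>A then (if (0<y \<and> (x,y-1)\<in>A) \<and> (x,y+1)\<in>A then 2 else if (0<y \<and> (x,y-1)\<in>A) \<or> (x,y+1)\<in>A then 1 else 2) else 0)
      else if 0<y \<and> a = (x,y-1) then (if (x,y-1)\<in>A \<and> \<not>((1,y)\<in>A \<and> (x,y+1)\<in>A) then (if (1,y)\<in>A \<or> (x,y+1)\<in>A then 1 else 2) else 0)
      else if a = (x,y+1) then (if (x,y+1)\<in>A \<and> \<not>((1,y)\<in>A \<and> 0<y \<and> (x,y-1)\<in>A) then (if (1,y)\<in>A \<or> (0<y \<and> (x,y-1)\<in>A) then 1 else 2) else 0)
      else 0)
  else 0)"

lemma tok_nz: "tok A v a \<noteq> 0 \<Longrightarrow> a \<in> A \<and> v \<in> {(fst a - 1, snd a), (fst a + 1, snd a), (fst a, snd a - 1), (fst a, snd a + 1)}"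
  by (cases v) (auto simp: tok_def Let_def split: if_splits)

lemma sum_h1: "finite A \<Longrightarrow> a \<in> A \<Longrightarrow> 2 \<le> f a \<Longrightarrow> (2::nat) \<le> (\<Sum>b\<in>A. f b)"
  by (meson le_trans member_le_sum zero_le)

lemma sum_h2: "finite A \<Longrightarrow> a1 \<in> A \<Longrightarrow> a2 \<in> A \<Longrightarrow> a1 \<noteq> a2 \<Longrightarrow> 2 \<le> f a1 + f a2 \<Longrightarrow> (2::nat) \<le> (\<Sum>b\<in>A. f b)"
proof -
  assume "finite A" "a1 \<in> A" "a2 \<in> A" "a1 \<noteq> a2" "2 \<le> f a1 + f a2"
  moreover have "(\<Sum>b\<in>{a1,a2}. f b) \<le> (\<Sum>b\<in>A. f b)"
    using calculation by (intro sum_mono2) auto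
  ultimately show ?thesis by simp
qed

lemma tok_out:
  assumes fin: "finite A" and v: "(x,y) \<notin> A" "x < 3" and z: "z \<in> A" "grid_E z (x,y)"
    and rows: "\<And>a b. (a,b) \<in> A \<Longrightarrow> a < 3"
  shows "2 \<le> (\<Sum>a\<in>A. tok A (x,y) a)"
proof -
  have zc: "z = (x, Suc y) \<or> (0 < y \<and> z = (x, y - 1)) \<or> z = (Suc x, y) \<or> (0 < x \<and> z = (x - 1, y))"
    using z(2) by (cases z) (auto simp: gridE_iff)
  consider "x = 1" | "x = 0 \<or> x = 2" using v(2) by linarith
  thus ?thesis
  proof cases
    case 1
    show ?thesis
    proof (cases "(0,y) \<in> A")
      case T0: True
      show ?thesis
      proof (cases "(2,y) \<in> A")
        case True thus ?thesis using T0 1 by (intro sum_h2[OF fin T0 True]) (auto simp: tok_def)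
      next
        case False thus ?thesis using T0 1 by (intro sum_h1[OF fin T0]) (auto simp: tok_def)
      qed
    next
      case T0: False
      show ?thesis
      proof (cases "(2,y) \<in> A")
        case True thus ?thesis using T0 1 by (intro sum_h1[OF fin True]) (auto simp: tok_def)
      next
        case B0: False
        show ?thesis
        proof (cases "0 < y \<and> (1,y-1) \<in> A")
          case L: True
          show ?thesis
          proof (cases "(1,y+1) \<in> A")
            case True thus ?thesis using T0 B0 L 1 by (intro sum_h2[of A "(1,y-1)" "(1,y+1)", OF fin _ True]) (auto simp: tok_def)
          next
            case False thus ?thesis using T0 B0 L 1 by (intro sum_h1[of A "(1,y-1)", OF fin]) (auto simp: tok_def)
          qed
        next
          case L: False
          have "(1,y+1) \<in> A" using zc z(1) T0 B0 L 1 by (auto simp: numeral_2_eq_2)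
          thus ?thesis using T0 B0 L 1 by (intro sum_h1[of A "(1,y+1)", OF fin]) (auto simp: tok_def)
        qed
      qed
    qed
  next
    case 2
    have x1: "x \<noteq> 1" using 2 by auto
    show ?thesis
    proof (cases "(1,y) \<in> A")
      case M: True
      show ?thesis
      proof (cases "0 < y \<and> (x,y-1) \<in> A")
        case L: True
        show ?thesis
        proof (cases "(x,y+1) \<in> A")
          case True thus ?thesis using M L 2 by (intro sum_h1[of A "(1,y)", OF fin]) (auto simp: tok_def)
        next
          case False thus ?thesis using M L 2 by (intro sum_h2[of A "(1,y)" "(x,y-1)", OF fin]) (auto simp: tok_def)
        qed
      next
        case L: False
        show ?thesis
        proof (cases "(x,y+1) \<in> A")
          case True thus ?thesis using M L 2 by (intro sum_h2[of A "(1,y)" "(x,y+1)", OF fin]) (auto simp: tok_def)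
        next
          case False thus ?thesis using M L 2 by (intro sum_h1[of A "(1,y)", OF fin]) (auto simp: tok_def)
        qed
      qed
    next
      case M: False
      show ?thesis
      proof (cases "0 < y \<and> (x,y-1) \<in> A")
        case L: True
        show ?thesis
        proof (cases "(x,y+1) \<in> A")
          case True thus ?thesis using M L 2 by (intro sum_h2[of A "(x,y-1)" "(x,y+1)", OF fin]) (auto simp: tok_def)
        next
          case False thus ?thesis using M L 2 by (intro sum_h1[of A "(x,y-1)", OF fin]) (auto simp: tok_def)
        qed
      next
        case L: False
        have "(x,y+1) \<in> A" using zc z(1) M L 2 rows[of "Suc x" y] by (auto simp: numeral_2_eq_2)
        thus ?thesis using M L 2 by (intro sum_h1[of A "(x,y+1)", OF fin]) (auto simp: tok_def)
      qed
    qed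
  qed
qed

lemma tok_out_mid: "x = 0 \<or> x = 2 \<Longrightarrow> tok A (x,y) (1,y) = (if (1,y)\<in>A then (if (0<y \<and> (x,y-1)\<in>A) \<and> (x,y+1)\<in>A then 2 else if (0<y \<and> (x,y-1)\<in>A) \<or> (x,y+1)\<in>A then 1 else 2) else 0)"
  by (auto simp: tok_def)

lemma tok_out_right: "x = 0 \<or> x = 2 \<Longrightarrow> tok A (x,y) (x,Suc y) = (if (x,Suc y)\<in>A \<and> \<not>((1,y)\<in>A \<and> 0<y \<and> (x,y-1)\<in>A) then (if (1,y)\<in>A \<or> (0<y \<and> (x,y-1)\<in>A) then 1 else 2) else 0)"
  by (auto simp: tok_def)

lemma tok_out_left: "x = 0 \<or> x = 2 \<Longrightarrow> tok A (x,Suc y) (x,y) = (if (x,y)\<in>A \<and> \<not>((1,Suc y)\<in>A \<and> (x,Suc (Suc y))\<in>A) then (if (1,Suc y)\<in>A \<or> (x,Suc (Suc y))\<in>A then 1 else 2) else 0)"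
  by (auto simp: tok_def)

lemma tok_mid_up: "tok A (1,y) (0,y) = (if (0,y)\<in>A then (if (2,y)\<in>A then 1 else 2) else 0)"
  by (auto simp: tok_def)
lemma tok_mid_down: "tok A (1,y) (2,y) = (if (2,y)\<in>A then (if (0,y)\<in>A then 1 else 2) else 0)"
  by (auto simp: tok_def)
lemma tok_mid_right: "tok A (1,y) (1,Suc y) = (if (1,Suc y)\<in>A \<and> (0,y)\<notin>A \<and> (2,y)\<notin>A then (if 0<y \<and> (1,y-1)\<in>A then 1 else 2) else 0)"
  by (auto simp: tok_def)
lemma tok_mid_left: "tok A (1,Suc y) (1,y) = (if (1,y)\<in>A \<and> (0,Suc y)\<notin>A \<and> (2,Suc y)\<notin>A then (if (1,Suc (Suc y))\<in>A then 1 else 2) else 0)"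
  by (auto simp: tok_def)

lemma sum_insert_le: "finite S \<Longrightarrow> sum f (insert x S) \<le> f x + (sum f S::nat)"
  by (simp add: sum.insert_if)

lemma sum4_le: "(\<Sum>v\<in>{p1,p2,p3,p4}. f v) \<le> f p1 + f p2 + f p3 + (f p4::nat)"
proof -
  have "(\<Sum>v\<in>{p1,p2,p3,p4}. f v) \<le> f p1 + (\<Sum>v\<in>{p2,p3,p4}. f v)" by (rule sum_insert_le) simp
  also have "(\<Sum>v\<in>{p2,p3,p4}. f v) \<le> f p2 + (\<Sum>v\<in>{p3,p4}. f v)" by (rule sum_insert_le) simp
  also have "(\<Sum>v\<in>{p3,p4}. f v) \<le> f p3 + (\<Sum>v\<in>{p4}. f v)" by (rule sum_insert_le) simp
  finally show ?thesis by simp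
qed

lemma sum_in_le:
  assumes "finite F"
  shows "(\<Sum>v\<in>F. tok A v (x,y)) \<le> (\<lambda>v. if v \<in> F then tok A v (x,y) else 0) (x-1,y) + (\<lambda>v. if v \<in> F then tok A v (x,y) else 0) (x+1,y)
          + (\<lambda>v. if v \<in> F then tok A v (x,y) else 0) (x,y-1) + (\<lambda>v. if v \<in> F then tok A v (x,y) else 0) (x,y+1)"
proof -
  let ?N = "{(x-1,y),(x+1,y),(x,y-1),(x,y+1)}"
  let ?g = "\<lambda>v. if v \<in> F then tok A v (x,y) else 0"
  have "(\<Sum>v\<in>F. tok A v (x,y)) = (\<Sum>v\<in>F \<inter> ?N. tok A v (x,y))"
  proof (rule sum.mono_neutral_right)
    show "\<forall>v\<in>F - F \<inter> ?N. tok A v (x, y) = 0"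
    proof
      fix v assume "v \<in> F - F \<inter> ?N"
      thus "tok A v (x, y) = 0" using tok_nz[of A v "(x,y)"] by auto
    qed
  qed (use assms in auto)
  also have "\<dots> = (\<Sum>v\<in>?N \<inter> F. tok A v (x,y))" by (simp only: Int_commute)
  also have "\<dots> = (\<Sum>v\<in>?N. ?g v)" by (rule sum.inter_restrict) simp
  also have "\<dots> \<le> ?g (x-1,y) + ?g (x+1,y) + ?g (x,y-1) + ?g (x,y+1)" by (rule sum4_le)
  finally show ?thesis .
qed

lemma mid_arith:
  fixes f1 f2 f3 f4 a0l a0r a2l a2r m2l m2r :: bool and g1 g2 g3 g4 :: nat
  assumes "g1 = (if f1 then (if a0l \<and> a0r then 2 else if a0l \<or> a0r then 1 else 2) else 0)"
    and "g2 = (if f2 then (if a2l \<and> a2r then 2 else if a2l \<or> a2r then 1 else 2) else 0)"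
    and "g3 = (if f3 then (if \<not> a0l \<and> \<not> a2l then (if m2l then 1 else 2) else 0) else 0)"
    and "g4 = (if f4 then (if \<not> a0r \<and> \<not> a2r then (if m2r then 1 else 2) else 0) else 0)"
    and "f1 \<Longrightarrow> f2 \<Longrightarrow> a0l \<or> a0r \<or> a2l \<or> a2r"
    and "f1 \<Longrightarrow> f3 \<Longrightarrow> a0r \<or> a2l \<or> m2l"
    and "f1 \<Longrightarrow> f4 \<Longrightarrow> a0l \<or> a2r \<or> m2r"
    and "f2 \<Longrightarrow> f3 \<Longrightarrow> a2r \<or> a0l \<or> m2l"
    and "f2 \<Longrightarrow> f4 \<Longrightarrow> a2l \<or> a0r \<or> m2r"
    and "f3 \<Longrightarrow> f4 \<Longrightarrow> a0l \<or> a2l \<or> m2l \<or> a0r \<or> a2r \<or> m2r"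
  shows "g1 + g2 + g3 + g4 \<le> 4"
  using assms by (auto split: if_splits)

lemma top_arith:
  fixes f1 f3 f4 b2 mL mR tL tR :: bool and g1 g3 g4 :: nat
  assumes "g1 = (if f1 then (if b2 then 1 else 2) else 0)"
    and "g3 = (if f3 then (if \<not> (mL \<and> tL) then (if mL \<or> tL then 1 else 2) else 0) else 0)"
    and "g4 = (if f4 then (if \<not> (mR \<and> tR) then (if mR \<or> tR then 1 else 2) else 0) else 0)"
    and "f1 \<Longrightarrow> f3 \<Longrightarrow> b2 \<or> mR \<or> tL"
    and "f1 \<Longrightarrow> f4 \<Longrightarrow> b2 \<or> mL \<or> tR"
    and "f3 \<Longrightarrow> f4 \<Longrightarrow> mL \<or> tL \<or> mR \<or> tR"
  shows "g1 + g3 + g4 \<le> 4"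
  using assms by (auto split: if_splits)

lemma core_mid:
  assumes D: "\<And>u v. u \<in> grid_V n - A \<Longrightarrow> v \<in> grid_V n - A \<Longrightarrow> u \<noteq> v \<Longrightarrow> \<exists>z\<in>A. grid_E z u \<noteq> grid_E z v"
    and rows: "\<And>a b. (a,b) \<in> A \<Longrightarrow> a < 3"
    and a: "(1,c) \<in> A"
    and g: "g = (\<lambda>v. if v \<in> grid_V n - A then tok A v (1,c) else 0)"
  shows "g (0,c) + g (2,c) + g (1,c-1) + g (1,c+1) \<le> 4"
proof -
  define F where "F = grid_V n - A"
  define a0l where "a0l = (0<c \<and> (0,c-1)\<in>A)"
  define a2l where "a2l = (0<c \<and> (2,c-1)\<in>A)"
  define a0r where "a0r = ((0,Suc c)\<in>A)"
  define a2r where "a2r = ((2,Suc c)\<in>A)"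
  define m2l where "m2l = (1<c \<and> (1,c-2)\<in>A)"
  define m2r where "m2r = ((1,Suc (Suc c))\<in>A)"
  have E: "\<exists>z1 z2. (z1,z2) \<in> A \<and> grid_E (z1,z2) u \<noteq> grid_E (z1,z2) v" if "u \<in> F" "v \<in> F" "u \<noteq> v" for u v
    using D[of u v] that unfolding F_def by auto
  have P12: "a0l \<or> a0r \<or> a2l \<or> a2r" if h: "(0,c) \<in> F" "(2,c) \<in> F"
  proof -
    have ne: "((0,c)::nat\<times>nat) \<noteq> (2,c)" by auto
    obtain z1 z2 where z: "(z1,z2) \<in> A" "grid_E (z1,z2) (0,c) \<noteq> grid_E (z1,z2) (2,c)" using E[OF h ne] by auto
    thus ?thesis using rows[OF z(1)] unfolding a0l_def a0r_def a2l_def a2r_def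
      by (auto simp: gridE_iff)
  qed
  have P13: "a0r \<or> a2l \<or> m2l" if h: "(0,c) \<in> F" "(1,c-1) \<in> F"
  proof -
    have c: "0 < c" using h a unfolding F_def by (cases c) auto
    have ne: "((0,c)::nat\<times>nat) \<noteq> (1,c-1)" using c by auto
    obtain z1 z2 where z: "(z1,z2) \<in> A" "grid_E (z1,z2) (0,c) \<noteq> grid_E (z1,z2) (1,c-1)" using E[OF h ne] c by auto
    thus ?thesis using rows[OF z(1)] c h unfolding a0l_def a0r_def a2l_def a2r_def m2l_def F_def
      by (cases c) (auto simp: gridE_iff numeral_2_eq_2)
  qed
  have P14: "a0l \<or> a2r \<or> m2r" if h: "(0,c) \<in> F" "(1,Suc c) \<in> F"
  proof -
    obtain z1 z2 where z: "(z1,z2) \<in> A" "grid_E (z1,z2) (0,c) \<noteq> grid_E (z1,z2) (1,Suc c)" using E[OF h] by auto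
    have z1: "z1 = 0 \<or> z1 = 1 \<or> z1 = 2" using rows[OF z(1)] by auto
    from z1 show ?thesis using z h unfolding a0l_def a0r_def a2l_def a2r_def m2l_def m2r_def F_def
      by (elim disjE; cases c) (auto simp: gridE_iff numeral_2_eq_2)
  qed
  have P23: "a2r \<or> a0l \<or> m2l" if h: "(2,c) \<in> F" "(1,c-1) \<in> F"
  proof -
    have c: "0 < c" using h a unfolding F_def by (cases c) auto
    have ne: "((2,c)::nat\<times>nat) \<noteq> (1,c-1)" using c by auto
    obtain z1 z2 where z: "(z1,z2) \<in> A" "grid_E (z1,z2) (2,c) \<noteq> grid_E (z1,z2) (1,c-1)" using E[OF h ne] c by auto
    have z1: "z1 = 0 \<or> z1 = 1 \<or> z1 = 2" using rows[OF z(1)] by auto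
    from z1 show ?thesis using z c h unfolding a0l_def a0r_def a2l_def a2r_def m2l_def m2r_def F_def
      by (elim disjE; cases c) (auto simp: gridE_iff numeral_2_eq_2)
  qed
  have P24: "a2l \<or> a0r \<or> m2r" if h: "(2,c) \<in> F" "(1,Suc c) \<in> F"
  proof -
    obtain z1 z2 where z: "(z1,z2) \<in> A" "grid_E (z1,z2) (2,c) \<noteq> grid_E (z1,z2) (1,Suc c)" using E[OF h] by auto
    have z1: "z1 = 0 \<or> z1 = 1 \<or> z1 = 2" using rows[OF z(1)] by auto
    from z1 show ?thesis using z h unfolding a0l_def a0r_def a2l_def a2r_def m2l_def m2r_def F_def
      by (elim disjE; cases c) (auto simp: gridE_iff numeral_2_eq_2)
  qed
  have P34: "a0l \<or> a2l \<or> m2l \<or> a0r \<or> a2r \<or> m2r" if h: "(1,c-1) \<in> F" "(1,Suc c) \<in> F"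
  proof -
    have c: "0 < c" using h a unfolding F_def by (cases c) auto
    have ne: "((1,c-1)::nat\<times>nat) \<noteq> (1,Suc c)" by auto
    obtain z1 z2 where z: "(z1,z2) \<in> A" "grid_E (z1,z2) (1,c-1) \<noteq> grid_E (z1,z2) (1,Suc c)" using E[OF h ne] by auto
    have z1: "z1 = 0 \<or> z1 = 1 \<or> z1 = 2" using rows[OF z(1)] by auto
    from z1 show ?thesis using z c h unfolding a0l_def a0r_def a2l_def a2r_def m2l_def m2r_def F_def
      by (elim disjE; cases c) (auto simp: gridE_iff numeral_2_eq_2)
  qed
  have G1: "g (0,c) = (if (0,c) \<in> F then (if a0l \<and> a0r then 2 else if a0l \<or> a0r then 1 else 2) else 0)"
    unfolding g F_def a0l_def a0r_def using a tok_out_mid[of 0 A c] by simp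
  have G2: "g (2,c) = (if (2,c) \<in> F then (if a2l \<and> a2r then 2 else if a2l \<or> a2r then 1 else 2) else 0)"
    unfolding g F_def a2l_def a2r_def using a tok_out_mid[of 2 A c] by simp
  have G3: "g (1,c-1) = (if (1,c-1) \<in> F then (if \<not> a0l \<and> \<not> a2l then (if m2l then 1 else 2) else 0) else 0)"
    unfolding g F_def a0l_def a2l_def m2l_def using a tok_mid_right[of A "c-1"] by (cases c) (auto simp add: numeral_2_eq_2)
  have G4: "g (1,c+1) = (if (1,Suc c) \<in> F then (if \<not> a0r \<and> \<not> a2r then (if m2r then 1 else 2) else 0) else 0)"
    unfolding g F_def a0r_def a2r_def m2r_def using a tok_mid_left[of A c] by simp
  show ?thesis
    by (rule mid_arith[OF G1 G2 G3 G4 P12 P13 P14 P23 P24 P34])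
qed

lemma tok_mid_vert: "x = 0 \<or> x = 2 \<Longrightarrow> tok A (1,y) (x,y) = (if (x,y)\<in>A then (if (2-x,y)\<in>A then 1 else 2) else 0)"
  by (auto simp: tok_def)

lemma core_outer:
  assumes D: "\<And>u v. u \<in> grid_V n - A \<Longrightarrow> v \<in> grid_V n - A \<Longrightarrow> u \<noteq> v \<Longrightarrow> \<exists>z\<in>A. grid_E z u \<noteq> grid_E z v"
    and rows: "\<And>a b. (a,b) \<in> A \<Longrightarrow> a < 3"
    and x: "x = 0 \<or> x = 2"
    and a: "(x,c) \<in> A"
    and g: "g = (\<lambda>v. if v \<in> grid_V n - A then tok A v (x,c) else 0)"
  shows "g (1,c) + g (x,c-1) + g (x,c+1) \<le> 4"
proof -
  define F where "F = grid_V n - A"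
  define b2 where "b2 = ((2-x,c)\<in>A)"
  define mL where "mL = (0<c \<and> (1,c-1)\<in>A)"
  define mR where "mR = ((1,Suc c)\<in>A)"
  define tL where "tL = (1<c \<and> (x,c-2)\<in>A)"
  define tR where "tR = ((x,Suc (Suc c))\<in>A)"
  have E: "\<exists>z1 z2. (z1,z2) \<in> A \<and> grid_E (z1,z2) u \<noteq> grid_E (z1,z2) v" if "u \<in> F" "v \<in> F" "u \<noteq> v" for u v
    using D[of u v] that unfolding F_def by auto
  have P13: "b2 \<or> mR \<or> tL" if h: "(1,c) \<in> F" "(x,c-1) \<in> F"
  proof -
    have c: "0 < c" using h a unfolding F_def by (cases c) auto
    have ne: "((1,c)::nat\<times>nat) \<noteq> (x,c-1)" using c by auto
    obtain z1 z2 where z: "(z1,z2) \<in> A" "grid_E (z1,z2) (1,c) \<noteq> grid_E (z1,z2) (x,c-1)" using E[OF h ne] by auto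
    have z1: "z1 = 0 \<or> z1 = 1 \<or> z1 = 2" using rows[OF z(1)] by auto
    from z1 x show ?thesis using z c h a unfolding b2_def mL_def mR_def tL_def tR_def F_def
      by (elim disjE; cases c) (auto simp: gridE_iff numeral_2_eq_2)
  qed
  have P14: "b2 \<or> mL \<or> tR" if h: "(1,c) \<in> F" "(x,Suc c) \<in> F"
  proof -
    have ne: "((1,c)::nat\<times>nat) \<noteq> (x,Suc c)" by auto
    obtain z1 z2 where z: "(z1,z2) \<in> A" "grid_E (z1,z2) (1,c) \<noteq> grid_E (z1,z2) (x,Suc c)" using E[OF h ne] by auto
    have z1: "z1 = 0 \<or> z1 = 1 \<or> z1 = 2" using rows[OF z(1)] by auto
    from z1 x show ?thesis using z h a unfolding b2_def mL_def mR_def tL_def tR_def F_def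
      by (elim disjE; cases c) (auto simp: gridE_iff numeral_2_eq_2)
  qed
  have P34: "mL \<or> tL \<or> mR \<or> tR" if h: "(x,c-1) \<in> F" "(x,Suc c) \<in> F"
  proof -
    have c: "0 < c" using h a unfolding F_def by (cases c) auto
    have ne: "((x,c-1)::nat\<times>nat) \<noteq> (x,Suc c)" by auto
    obtain z1 z2 where z: "(z1,z2) \<in> A" "grid_E (z1,z2) (x,c-1) \<noteq> grid_E (z1,z2) (x,Suc c)" using E[OF h ne] by auto
    have z1: "z1 = 0 \<or> z1 = 1 \<or> z1 = 2" using rows[OF z(1)] by auto
    from z1 x show ?thesis using z c h a unfolding b2_def mL_def mR_def tL_def tR_def F_def
      by (elim disjE; cases c) (auto simp: gridE_iff numeral_2_eq_2)
  qed
  have G1: "g (1,c) = (if (1,c) \<in> F then (if b2 then 1 else 2) else 0)"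
    unfolding g F_def b2_def using a tok_mid_vert[OF x, of A c] by simp
  have G3: "g (x,c-1) = (if (x,c-1) \<in> F then (if \<not> (mL \<and> tL) then (if mL \<or> tL then 1 else 2) else 0) else 0)"
    unfolding g F_def mL_def tL_def using a tok_out_right[OF x, of A "c-1"] by (cases c) (auto simp add: numeral_2_eq_2)
  have G4: "g (x,c+1) = (if (x,Suc c) \<in> F then (if \<not> (mR \<and> tR) then (if mR \<or> tR then 1 else 2) else 0) else 0)"
    unfolding g F_def mR_def tR_def using a tok_out_left[OF x, of A c] by simp
  show ?thesis
    by (rule top_arith[OF G1 G3 G4 P13 P14 P34])
qed

lemma card_grid_V: "card (grid_V n) = 3 * n" and finite_grid_V: "finite (grid_V n)"
  by (auto simp: grid_V_def path_graph_def card_cartesian_product)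

lemma in_bound:
  assumes D: "\<And>u v. u \<in> grid_V n - A \<Longrightarrow> v \<in> grid_V n - A \<Longrightarrow> u \<noteq> v \<Longrightarrow> \<exists>z\<in>A. grid_E z u \<noteq> grid_E z v"
    and rows: "\<And>a b. (a,b) \<in> A \<Longrightarrow> a < 3"
    and a: "(x,y) \<in> A"
  shows "(\<Sum>v\<in>grid_V n - A. tok A v (x,y)) \<le> 4"
proof -
  define g where "g = (\<lambda>v. if v \<in> grid_V n - A then tok A v (x,y) else 0)"
  have "(\<Sum>v\<in>grid_V n - A. tok A v (x,y)) \<le> g (x-1,y) + g (x+1,y) + g (x,y-1) + g (x,y+1)"
    unfolding g_def by (rule sum_in_le) (simp add: finite_grid_V)
  also have "\<dots> \<le> 4"
  proof -
    have "x = 0 \<or> x = 1 \<or> x = 2" using rows[OF a] by auto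
    thus ?thesis
    proof (elim disjE)
      assume x: "x = 0"
      have "g (x-1,y) = 0" using a x by (simp add: g_def)
      moreover have "g (1,y) + g (x,y-1) + g (x,y+1) \<le> 4"
        using core_outer[OF D rows _ a g_def] x by auto
      ultimately show ?thesis using x by simp
    next
      assume x: "x = 1"
      have a1: "(1,y) \<in> A" using a x by simp
      have g1: "g = (\<lambda>v. if v \<in> grid_V n - A then tok A v (1,y) else 0)" unfolding g_def x by simp
      have "g (0,y) + g (2,y) + g (1,y-1) + g (1,y+1) \<le> 4"
        by (rule core_mid[OF D rows a1 g1])
      thus ?thesis using x by (simp add: numeral_2_eq_2)
    next
      assume x: "x = 2"
      have "g (x+1,y) = 0" using x by (simp add: g_def grid_V_iff)
      moreover have "g (1,y) + g (x,y-1) + g (x,y+1) \<le> 4"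
        using core_outer[OF D rows _ a g_def] x by auto
      moreover have "x - 1 = 1" using x by simp
      ultimately show ?thesis by simp
    qed
  qed
  finally show ?thesis .
qed

lemma lower_card:
  assumes res: "adj_resolving (grid_V n) grid_E A"
  shows "n \<le> card A"
proof -
  let ?V = "grid_V n"
  let ?F = "?V - A"
  define F' where "F' = {v \<in> ?F. \<exists>z\<in>A. grid_E z v}"
  have AV: "A \<subseteq> ?V" using res by (simp add: adj_resolving_def)
  have finA: "finite A" using AV finite_grid_V finite_subset by blast
  have finF: "finite ?F" using finite_grid_V by blast
  have rows: "\<And>a b. (a,b) \<in> A \<Longrightarrow> a < 3" using AV by (auto simp: grid_V_iff)
  have D: "\<And>u v. u \<in> ?F \<Longrightarrow> v \<in> ?F \<Longrightarrow> u \<noteq> v \<Longrightarrow> \<exists>z\<in>A. grid_E z u \<noteq> grid_E z v"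
    using resolving_distinct[OF res] by blast
  have cF: "card ?F = 3 * n - card A" using AV by (simp add: card_Diff_subset finA card_grid_V)
  have F'F: "F' \<subseteq> ?F" unfolding F'_def by auto
  have sub1: "card (?F - F') \<le> Suc 0"
  proof -
    have fin: "finite (?F - F')" using finF by auto
    have "\<forall>u\<in>?F - F'. \<forall>v\<in>?F - F'. u = v"
    proof (intro ballI)
      fix u v assume u: "u \<in> ?F - F'" and v: "v \<in> ?F - F'"
      show "u = v"
      proof (rule ccontr)
        assume "u \<noteq> v"
        then obtain z where "z \<in> A" "grid_E z u \<noteq> grid_E z v" using D u v by blast
        thus False using u v unfolding F'_def by auto
      qed
    qed
    thus ?thesis using card_le_Suc0_iff_eq[OF fin] by blast
  qed
  have cF2: "card ?F \<le> card F' + 1"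
  proof -
    have "card ?F = card F' + card (?F - F')"
      using F'F finF by (metis card_Diff_subset card_mono finite_subset le_add_diff_inverse)
    thus ?thesis using sub1 by simp
  qed
  have "2 * card F' = (\<Sum>v\<in>F'. (2::nat))" by simp
  also have "\<dots> \<le> (\<Sum>v\<in>F'. \<Sum>a\<in>A. tok A v a)"
  proof (rule sum_mono)
    fix v assume v: "v \<in> F'"
    obtain x y where xy: "v = (x,y)" by (cases v)
    obtain z where z: "z \<in> A" "grid_E z v" using v unfolding F'_def by auto
    have "(x,y) \<notin> A" "x < 3" using v xy unfolding F'_def by (auto simp: grid_V_iff)
    thus "2 \<le> (\<Sum>a\<in>A. tok A v a)" using tok_out[of A x y z] finA z xy rows by auto
  qed
  also have "\<dots> = (\<Sum>a\<in>A. \<Sum>v\<in>F'. tok A v a)" by (rule sum.swap)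
  also have "\<dots> \<le> (\<Sum>a\<in>A. \<Sum>v\<in>?F. tok A v a)"
    by (intro sum_mono sum_mono2 finF F'F) auto
  also have "\<dots> \<le> (\<Sum>a\<in>A. (4::nat))"
  proof (rule sum_mono)
    fix a assume a: "a \<in> A"
    obtain x y where xy: "a = (x,y)" by (cases a)
    show "(\<Sum>v\<in>?F. tok A v a) \<le> 4" using in_bound[OF D rows a[unfolded xy]] xy by simp
  qed
  also have "\<dots> = 4 * card A" by simp
  finally have "2 * card F' \<le> 4 * card A" .
  moreover have "card A \<le> 3 * n" using AV by (metis card_grid_V card_mono finite_grid_V)
  ultimately show ?thesis using cF cF2 by linarith
qed

definition colty :: "nat \<Rightarrow> nat \<Rightarrow> nat" where "colty s j = (j + s) mod 3"

definition Aset :: "nat \<Rightarrow> nat \<Rightarrow> (nat \<times> nat) set" where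
  "Aset s n = {(r,j). j < n \<and> r < 3 \<and> ((colty s j = 0 \<and> r \<noteq> 1) \<or> (colty s j = 1 \<and> r = 1))}"

lemma colty_lt: "colty s j < 3" by (simp add: colty_def)
lemma colty_Suc: "colty s (Suc j) = (if colty s j = 2 then 0 else Suc (colty s j))"
  unfolding colty_def by (simp add: mod_Suc)
lemma colty_pred: "0 < j \<Longrightarrow> colty s (j - 1) = (if colty s j = 0 then 2 else colty s j - 1)"
proof -
  assume "0 < j"
  then obtain i where "j = Suc i" by (cases j) auto
  thus ?thesis using colty_Suc[of s i] colty_lt[of s i] by auto
qed

lemma Aset_iff: "(r,j) \<in> Aset s n \<longleftrightarrow> j < n \<and> r < 3 \<and> ((colty s j = 0 \<and> r \<noteq> 1) \<or> (colty s j = 1 \<and> r = 1))"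
  by (simp add: Aset_def)

definition expl :: "nat \<Rightarrow> nat \<Rightarrow> nat \<times> nat \<Rightarrow> (nat \<times> nat) set" where
  "expl s n v = (let r = fst v; j = snd v in
     if colty s j = 0 then {(0,j),(2,j)} \<union> (if Suc j < n then {(1,Suc j)} else {})
     else if colty s j = 1 then {(1,j)} \<union> (if 0 < j then {(r,j-1)} else {})
     else if r = 1 then (if 0 < j then {(1,j-1)} else {})
     else (if Suc j < n then {(r,Suc j)} else {}))"

lemma tr_expl:
  assumes v: "(r,j) \<in> grid_V n - Aset s n"
  shows "{z \<in> Aset s n. grid_E z (r,j)} = expl s n (r,j)"
proof -
  have r: "r < 3" "j < n" using v by (auto simp: grid_V_iff)
  have rc: "r = 0 \<or> r = 1 \<or> r = 2" using r by auto
  have tc: "colty s j = 0 \<or> colty s j = 1 \<or> colty s j = 2" using colty_lt[of s j] by auto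
  have nA: "(r,j) \<notin> Aset s n" using v by auto
  have S: "colty s (Suc j) = (if colty s j = 2 then 0 else Suc (colty s j))" by (rule colty_Suc)
  have P: "0 < j \<Longrightarrow> colty s (j - 1) = (if colty s j = 0 then 2 else colty s j - 1)" by (rule colty_pred)
  have key: "z \<in> Aset s n \<and> grid_E z (r,j) \<longleftrightarrow> z \<in> expl s n (r,j)" for z
  proof -
    obtain z1 z2 where zz: "z = (z1,z2)" by (cases z)
    have E: "grid_E (z1,z2) (r,j) \<longleftrightarrow> (z1 = r \<and> z2 = Suc j) \<or> (z1 = r \<and> 0 < j \<and> z2 = j - 1) \<or> (z2 = j \<and> z1 = Suc r) \<or> (z2 = j \<and> 0 < r \<and> z1 = r - 1)"
      by (auto simp: gridE_iff)
    from rc tc show ?thesis unfolding zz E using r nA S P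
      by (elim disjE) (auto simp: Aset_iff expl_def gr0_conv_Suc)
  qed
  show ?thesis using key by blast
qed

lemma expl_free:
  assumes hs: "(s = 0 \<and> n mod 3 = 1) \<or> (s = 2 \<and> n mod 3 \<noteq> 1)"
    and x: "(r,j) \<in> grid_V n - Aset s n"
  shows "(r = 1 \<and> colty s j = 0 \<and> Suc j < n \<and> expl s n (r,j) = {(0,j),(2,j),(1,Suc j)})
       \<or> (r = 1 \<and> colty s j = 0 \<and> \<not> Suc j < n \<and> expl s n (r,j) = {(0,j),(2,j)})
       \<or> (r \<noteq> 1 \<and> colty s j = 1 \<and> 0 < j \<and> expl s n (r,j) = {(1,j),(r,j-1)})
       \<or> (r = 1 \<and> colty s j = 2 \<and> 0 < j \<and> expl s n (r,j) = {(1,j-1)})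
       \<or> (r = 1 \<and> j = 0 \<and> expl s n (r,j) = {})
       \<or> (r \<noteq> 1 \<and> colty s j = 2 \<and> Suc j < n \<and> expl s n (r,j) = {(r,Suc j)})"
proof -
  have r: "r < 3" "j < n" using x by (auto simp: grid_V_iff)
  have nA: "(r,j) \<notin> Aset s n" using x by auto
  have t0: "colty s 0 \<noteq> 1" using hs by (auto simp: colty_def)
  have tl: "Suc j < n" if "colty s j = 2"
  proof (rule ccontr)
    assume "\<not> Suc j < n"
    hence "n = Suc j" using r by simp
    thus False using that hs unfolding colty_def by presburger
  qed
  have tc: "colty s j = 0 \<or> colty s j = 1 \<or> colty s j = 2" using colty_lt[of s j] by auto
  from tc show ?thesis
  proof (elim disjE)
    assume t: "colty s j = 0"
    hence "r = 1" using nA r by (auto simp: Aset_iff)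
    thus ?thesis using t by (cases "Suc j < n") (auto simp add: expl_def)
  next
    assume t: "colty s j = 1"
    have "r \<noteq> 1" using nA r t by (auto simp: Aset_iff)
    moreover have "0 < j" using t t0 by (cases j) auto
    ultimately show ?thesis using t by (auto simp add: expl_def)
  next
    assume t: "colty s j = 2"
    thus ?thesis using tl by (cases "r = 1"; cases "j = 0") (auto simp: expl_def)
  qed
qed

lemma expl_inj:
  assumes hs: "(s = 0 \<and> n mod 3 = 1) \<or> (s = 2 \<and> n mod 3 \<noteq> 1)"
    and x: "(r,j) \<in> grid_V n - Aset s n" and y: "(r',j') \<in> grid_V n - Aset s n"
    and eq: "expl s n (r,j) = expl s n (r',j')"
  shows "(r,j) = (r',j')"
proof -
  have F: "\<And>z. z \<in> expl s n (r,j) \<Longrightarrow> z \<in> expl s n (r',j')" "\<And>z. z \<in> expl s n (r',j') \<Longrightarrow> z \<in> expl s n (r,j)" using eq by auto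
  have ty: "colty s j < 3" "colty s j' < 3" by (rule colty_lt)+
  have Sj: "colty s (Suc j) = (if colty s j = 2 then 0 else Suc (colty s j))" "colty s (Suc j') = (if colty s j' = 2 then 0 else Suc (colty s j'))" by (rule colty_Suc)+
  have cx: "(r = 1 \<and> colty s j = 0 \<and> Suc j < n \<and> expl s n (r,j) = {(0,j),(2,j),(1,Suc j)}) \<or> (r = 1 \<and> colty s j = 0 \<and> \<not> Suc j < n \<and> expl s n (r,j) = {(0,j),(2,j)}) \<or> (r \<noteq> 1 \<and> colty s j = 1 \<and> 0 < j \<and> expl s n (r,j) = {(1,j),(r,j-1)}) \<or> (r = 1 \<and> colty s j = 2 \<and> 0 < j \<and> expl s n (r,j) = {(1,j-1)}) \<or> (r = 1 \<and> j = 0 \<and> expl s n (r,j) = {}) \<or> (r \<noteq> 1 \<and> colty s j = 2 \<and> Suc j < n \<and> expl s n (r,j) = {(r,Suc j)})" using expl_free[OF hs x] by blast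
  have cy: "(r' = 1 \<and> colty s j' = 0 \<and> Suc j' < n \<and> expl s n (r',j') = {(0,j'),(2,j'),(1,Suc j')}) \<or> (r' = 1 \<and> colty s j' = 0 \<and> \<not> Suc j' < n \<and> expl s n (r',j') = {(0,j'),(2,j')}) \<or> (r' \<noteq> 1 \<and> colty s j' = 1 \<and> 0 < j' \<and> expl s n (r',j') = {(1,j'),(r',j'-1)}) \<or> (r' = 1 \<and> colty s j' = 2 \<and> 0 < j' \<and> expl s n (r',j') = {(1,j'-1)}) \<or> (r' = 1 \<and> j' = 0 \<and> expl s n (r',j') = {}) \<or> (r' \<noteq> 1 \<and> colty s j' = 2 \<and> Suc j' < n \<and> expl s n (r',j') = {(r',Suc j')})" using expl_free[OF hs y] by blast
  show ?thesis
  using cx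
  proof (elim disjE)
    assume hx: "r = 1 \<and> colty s j = 0 \<and> Suc j < n \<and> expl s n (r,j) = {(0,j),(2,j),(1,Suc j)}"
    show ?thesis using cy
    proof (elim disjE)
      assume hy: "r' = 1 \<and> colty s j' = 0 \<and> Suc j' < n \<and> expl s n (r',j') = {(0,j'),(2,j'),(1,Suc j')}"
      have x0: "(0,j) \<in> expl s n (r',j')" using hx by (intro F(1)) auto
      have x1: "(2,j) \<in> expl s n (r',j')" using hx by (intro F(1)) auto
      have x2: "(1,Suc j) \<in> expl s n (r',j')" using hx by (intro F(1)) auto
      have y0: "(0,j') \<in> expl s n (r,j)" using hy by (intro F(2)) auto
      have y1: "(2,j') \<in> expl s n (r,j)" using hy by (intro F(2)) auto
      have y2: "(1,Suc j') \<in> expl s n (r,j)" using hy by (intro F(2)) auto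
      show ?thesis using x0 x1 x2 y0 y1 y2 hx hy ty Sj by (auto split: if_splits)
    next
      assume hy: "r' = 1 \<and> colty s j' = 0 \<and> \<not> Suc j' < n \<and> expl s n (r',j') = {(0,j'),(2,j')}"
      have x0: "(0,j) \<in> expl s n (r',j')" using hx by (intro F(1)) auto
      have x1: "(2,j) \<in> expl s n (r',j')" using hx by (intro F(1)) auto
      have x2: "(1,Suc j) \<in> expl s n (r',j')" using hx by (intro F(1)) auto
      have y0: "(0,j') \<in> expl s n (r,j)" using hy by (intro F(2)) auto
      have y1: "(2,j') \<in> expl s n (r,j)" using hy by (intro F(2)) auto
      show ?thesis using x0 x1 x2 y0 y1 hx hy ty Sj by (auto split: if_splits)
    next
      assume hy: "r' \<noteq> 1 \<and> colty s j' = 1 \<and> 0 < j' \<and> expl s n (r',j') = {(1,j'),(r',j'-1)}"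
      have x0: "(0,j) \<in> expl s n (r',j')" using hx by (intro F(1)) auto
      have x1: "(2,j) \<in> expl s n (r',j')" using hx by (intro F(1)) auto
      have x2: "(1,Suc j) \<in> expl s n (r',j')" using hx by (intro F(1)) auto
      have y0: "(1,j') \<in> expl s n (r,j)" using hy by (intro F(2)) auto
      have y1: "(r',j'-1) \<in> expl s n (r,j)" using hy by (intro F(2)) auto
      show ?thesis using x0 x1 x2 y0 y1 hx hy ty Sj by (auto split: if_splits)
    next
      assume hy: "r' = 1 \<and> colty s j' = 2 \<and> 0 < j' \<and> expl s n (r',j') = {(1,j'-1)}"
      have x0: "(0,j) \<in> expl s n (r',j')" using hx by (intro F(1)) auto
      have x1: "(2,j) \<in> expl s n (r',j')" using hx by (intro F(1)) auto
      have x2: "(1,Suc j) \<in> expl s n (r',j')" using hx by (intro F(1)) auto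
      have y0: "(1,j'-1) \<in> expl s n (r,j)" using hy by (intro F(2)) auto
      show ?thesis using x0 x1 x2 y0 hx hy ty Sj by (auto split: if_splits)
    next
      assume hy: "r' = 1 \<and> j' = 0 \<and> expl s n (r',j') = {}"
      have x0: "(0,j) \<in> expl s n (r',j')" using hx by (intro F(1)) auto
      have x1: "(2,j) \<in> expl s n (r',j')" using hx by (intro F(1)) auto
      have x2: "(1,Suc j) \<in> expl s n (r',j')" using hx by (intro F(1)) auto
      show ?thesis using x0 x1 x2 hx hy ty Sj by (auto split: if_splits)
    next
      assume hy: "r' \<noteq> 1 \<and> colty s j' = 2 \<and> Suc j' < n \<and> expl s n (r',j') = {(r',Suc j')}"
      have x0: "(0,j) \<in> expl s n (r',j')" using hx by (intro F(1)) auto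
      have x1: "(2,j) \<in> expl s n (r',j')" using hx by (intro F(1)) auto
      have x2: "(1,Suc j) \<in> expl s n (r',j')" using hx by (intro F(1)) auto
      have y0: "(r',Suc j') \<in> expl s n (r,j)" using hy by (intro F(2)) auto
      show ?thesis using x0 x1 x2 y0 hx hy ty Sj by (auto split: if_splits)
    qed
  next
    assume hx: "r = 1 \<and> colty s j = 0 \<and> \<not> Suc j < n \<and> expl s n (r,j) = {(0,j),(2,j)}"
    show ?thesis using cy
    proof (elim disjE)
      assume hy: "r' = 1 \<and> colty s j' = 0 \<and> Suc j' < n \<and> expl s n (r',j') = {(0,j'),(2,j'),(1,Suc j')}"
      have x0: "(0,j) \<in> expl s n (r',j')" using hx by (intro F(1)) auto
      have x1: "(2,j) \<in> expl s n (r',j')" using hx by (intro F(1)) auto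
      have y0: "(0,j') \<in> expl s n (r,j)" using hy by (intro F(2)) auto
      have y1: "(2,j') \<in> expl s n (r,j)" using hy by (intro F(2)) auto
      have y2: "(1,Suc j') \<in> expl s n (r,j)" using hy by (intro F(2)) auto
      show ?thesis using x0 x1 y0 y1 y2 hx hy ty Sj by (auto split: if_splits)
    next
      assume hy: "r' = 1 \<and> colty s j' = 0 \<and> \<not> Suc j' < n \<and> expl s n (r',j') = {(0,j'),(2,j')}"
      have x0: "(0,j) \<in> expl s n (r',j')" using hx by (intro F(1)) auto
      have x1: "(2,j) \<in> expl s n (r',j')" using hx by (intro F(1)) auto
      have y0: "(0,j') \<in> expl s n (r,j)" using hy by (intro F(2)) auto
      have y1: "(2,j') \<in> expl s n (r,j)" using hy by (intro F(2)) auto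
      show ?thesis using x0 x1 y0 y1 hx hy ty Sj by (auto split: if_splits)
    next
      assume hy: "r' \<noteq> 1 \<and> colty s j' = 1 \<and> 0 < j' \<and> expl s n (r',j') = {(1,j'),(r',j'-1)}"
      have x0: "(0,j) \<in> expl s n (r',j')" using hx by (intro F(1)) auto
      have x1: "(2,j) \<in> expl s n (r',j')" using hx by (intro F(1)) auto
      have y0: "(1,j') \<in> expl s n (r,j)" using hy by (intro F(2)) auto
      have y1: "(r',j'-1) \<in> expl s n (r,j)" using hy by (intro F(2)) auto
      show ?thesis using x0 x1 y0 y1 hx hy ty Sj by (auto split: if_splits)
    next
      assume hy: "r' = 1 \<and> colty s j' = 2 \<and> 0 < j' \<and> expl s n (r',j') = {(1,j'-1)}"
      have x0: "(0,j) \<in> expl s n (r',j')" using hx by (intro F(1)) auto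
      have x1: "(2,j) \<in> expl s n (r',j')" using hx by (intro F(1)) auto
      have y0: "(1,j'-1) \<in> expl s n (r,j)" using hy by (intro F(2)) auto
      show ?thesis using x0 x1 y0 hx hy ty Sj by (auto split: if_splits)
    next
      assume hy: "r' = 1 \<and> j' = 0 \<and> expl s n (r',j') = {}"
      have x0: "(0,j) \<in> expl s n (r',j')" using hx by (intro F(1)) auto
      have x1: "(2,j) \<in> expl s n (r',j')" using hx by (intro F(1)) auto
      show ?thesis using x0 x1 hx hy ty Sj by (auto split: if_splits)
    next
      assume hy: "r' \<noteq> 1 \<and> colty s j' = 2 \<and> Suc j' < n \<and> expl s n (r',j') = {(r',Suc j')}"
      have x0: "(0,j) \<in> expl s n (r',j')" using hx by (intro F(1)) auto
      have x1: "(2,j) \<in> expl s n (r',j')" using hx by (intro F(1)) auto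
      have y0: "(r',Suc j') \<in> expl s n (r,j)" using hy by (intro F(2)) auto
      show ?thesis using x0 x1 y0 hx hy ty Sj by (auto split: if_splits)
    qed
  next
    assume hx: "r \<noteq> 1 \<and> colty s j = 1 \<and> 0 < j \<and> expl s n (r,j) = {(1,j),(r,j-1)}"
    show ?thesis using cy
    proof (elim disjE)
      assume hy: "r' = 1 \<and> colty s j' = 0 \<and> Suc j' < n \<and> expl s n (r',j') = {(0,j'),(2,j'),(1,Suc j')}"
      have x0: "(1,j) \<in> expl s n (r',j')" using hx by (intro F(1)) auto
      have x1: "(r,j-1) \<in> expl s n (r',j')" using hx by (intro F(1)) auto
      have y0: "(0,j') \<in> expl s n (r,j)" using hy by (intro F(2)) auto
      have y1: "(2,j') \<in> expl s n (r,j)" using hy by (intro F(2)) auto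
      have y2: "(1,Suc j') \<in> expl s n (r,j)" using hy by (intro F(2)) auto
      show ?thesis using x0 x1 y0 y1 y2 hx hy ty Sj by (auto split: if_splits)
    next
      assume hy: "r' = 1 \<and> colty s j' = 0 \<and> \<not> Suc j' < n \<and> expl s n (r',j') = {(0,j'),(2,j')}"
      have x0: "(1,j) \<in> expl s n (r',j')" using hx by (intro F(1)) auto
      have x1: "(r,j-1) \<in> expl s n (r',j')" using hx by (intro F(1)) auto
      have y0: "(0,j') \<in> expl s n (r,j)" using hy by (intro F(2)) auto
      have y1: "(2,j') \<in> expl s n (r,j)" using hy by (intro F(2)) auto
      show ?thesis using x0 x1 y0 y1 hx hy ty Sj by (auto split: if_splits)
    next
      assume hy: "r' \<noteq> 1 \<and> colty s j' = 1 \<and> 0 < j' \<and> expl s n (r',j') = {(1,j'),(r',j'-1)}"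
      have x0: "(1,j) \<in> expl s n (r',j')" using hx by (intro F(1)) auto
      have x1: "(r,j-1) \<in> expl s n (r',j')" using hx by (intro F(1)) auto
      have y0: "(1,j') \<in> expl s n (r,j)" using hy by (intro F(2)) auto
      have y1: "(r',j'-1) \<in> expl s n (r,j)" using hy by (intro F(2)) auto
      show ?thesis using x0 x1 y0 y1 hx hy ty Sj by (auto split: if_splits)
    next
      assume hy: "r' = 1 \<and> colty s j' = 2 \<and> 0 < j' \<and> expl s n (r',j') = {(1,j'-1)}"
      have x0: "(1,j) \<in> expl s n (r',j')" using hx by (intro F(1)) auto
      have x1: "(r,j-1) \<in> expl s n (r',j')" using hx by (intro F(1)) auto
      have y0: "(1,j'-1) \<in> expl s n (r,j)" using hy by (intro F(2)) auto
      show ?thesis using x0 x1 y0 hx hy ty Sj by (auto split: if_splits)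
    next
      assume hy: "r' = 1 \<and> j' = 0 \<and> expl s n (r',j') = {}"
      have x0: "(1,j) \<in> expl s n (r',j')" using hx by (intro F(1)) auto
      have x1: "(r,j-1) \<in> expl s n (r',j')" using hx by (intro F(1)) auto
      show ?thesis using x0 x1 hx hy ty Sj by (auto split: if_splits)
    next
      assume hy: "r' \<noteq> 1 \<and> colty s j' = 2 \<and> Suc j' < n \<and> expl s n (r',j') = {(r',Suc j')}"
      have x0: "(1,j) \<in> expl s n (r',j')" using hx by (intro F(1)) auto
      have x1: "(r,j-1) \<in> expl s n (r',j')" using hx by (intro F(1)) auto
      have y0: "(r',Suc j') \<in> expl s n (r,j)" using hy by (intro F(2)) auto
      show ?thesis using x0 x1 y0 hx hy ty Sj by (auto split: if_splits)
    qed
  next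
    assume hx: "r = 1 \<and> colty s j = 2 \<and> 0 < j \<and> expl s n (r,j) = {(1,j-1)}"
    show ?thesis using cy
    proof (elim disjE)
      assume hy: "r' = 1 \<and> colty s j' = 0 \<and> Suc j' < n \<and> expl s n (r',j') = {(0,j'),(2,j'),(1,Suc j')}"
      have x0: "(1,j-1) \<in> expl s n (r',j')" using hx by (intro F(1)) auto
      have y0: "(0,j') \<in> expl s n (r,j)" using hy by (intro F(2)) auto
      have y1: "(2,j') \<in> expl s n (r,j)" using hy by (intro F(2)) auto
      have y2: "(1,Suc j') \<in> expl s n (r,j)" using hy by (intro F(2)) auto
      show ?thesis using x0 y0 y1 y2 hx hy ty Sj by (auto split: if_splits)
    next
      assume hy: "r' = 1 \<and> colty s j' = 0 \<and> \<not> Suc j' < n \<and> expl s n (r',j') = {(0,j'),(2,j')}"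
      have x0: "(1,j-1) \<in> expl s n (r',j')" using hx by (intro F(1)) auto
      have y0: "(0,j') \<in> expl s n (r,j)" using hy by (intro F(2)) auto
      have y1: "(2,j') \<in> expl s n (r,j)" using hy by (intro F(2)) auto
      show ?thesis using x0 y0 y1 hx hy ty Sj by (auto split: if_splits)
    next
      assume hy: "r' \<noteq> 1 \<and> colty s j' = 1 \<and> 0 < j' \<and> expl s n (r',j') = {(1,j'),(r',j'-1)}"
      have x0: "(1,j-1) \<in> expl s n (r',j')" using hx by (intro F(1)) auto
      have y0: "(1,j') \<in> expl s n (r,j)" using hy by (intro F(2)) auto
      have y1: "(r',j'-1) \<in> expl s n (r,j)" using hy by (intro F(2)) auto
      show ?thesis using x0 y0 y1 hx hy ty Sj by (auto split: if_splits)
    next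
      assume hy: "r' = 1 \<and> colty s j' = 2 \<and> 0 < j' \<and> expl s n (r',j') = {(1,j'-1)}"
      have x0: "(1,j-1) \<in> expl s n (r',j')" using hx by (intro F(1)) auto
      have y0: "(1,j'-1) \<in> expl s n (r,j)" using hy by (intro F(2)) auto
      show ?thesis using x0 y0 hx hy ty Sj by (auto split: if_splits)
    next
      assume hy: "r' = 1 \<and> j' = 0 \<and> expl s n (r',j') = {}"
      have x0: "(1,j-1) \<in> expl s n (r',j')" using hx by (intro F(1)) auto
      show ?thesis using x0 hx hy ty Sj by (auto split: if_splits)
    next
      assume hy: "r' \<noteq> 1 \<and> colty s j' = 2 \<and> Suc j' < n \<and> expl s n (r',j') = {(r',Suc j')}"
      have x0: "(1,j-1) \<in> expl s n (r',j')" using hx by (intro F(1)) auto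
      have y0: "(r',Suc j') \<in> expl s n (r,j)" using hy by (intro F(2)) auto
      show ?thesis using x0 y0 hx hy ty Sj by (auto split: if_splits)
    qed
  next
    assume hx: "r = 1 \<and> j = 0 \<and> expl s n (r,j) = {}"
    show ?thesis using cy
    proof (elim disjE)
      assume hy: "r' = 1 \<and> colty s j' = 0 \<and> Suc j' < n \<and> expl s n (r',j') = {(0,j'),(2,j'),(1,Suc j')}"
      have y0: "(0,j') \<in> expl s n (r,j)" using hy by (intro F(2)) auto
      have y1: "(2,j') \<in> expl s n (r,j)" using hy by (intro F(2)) auto
      have y2: "(1,Suc j') \<in> expl s n (r,j)" using hy by (intro F(2)) auto
      show ?thesis using y0 y1 y2 hx hy ty Sj by (auto split: if_splits)
    next
      assume hy: "r' = 1 \<and> colty s j' = 0 \<and> \<not> Suc j' < n \<and> expl s n (r',j') = {(0,j'),(2,j')}"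
      have y0: "(0,j') \<in> expl s n (r,j)" using hy by (intro F(2)) auto
      have y1: "(2,j') \<in> expl s n (r,j)" using hy by (intro F(2)) auto
      show ?thesis using y0 y1 hx hy ty Sj by (auto split: if_splits)
    next
      assume hy: "r' \<noteq> 1 \<and> colty s j' = 1 \<and> 0 < j' \<and> expl s n (r',j') = {(1,j'),(r',j'-1)}"
      have y0: "(1,j') \<in> expl s n (r,j)" using hy by (intro F(2)) auto
      have y1: "(r',j'-1) \<in> expl s n (r,j)" using hy by (intro F(2)) auto
      show ?thesis using y0 y1 hx hy ty Sj by (auto split: if_splits)
    next
      assume hy: "r' = 1 \<and> colty s j' = 2 \<and> 0 < j' \<and> expl s n (r',j') = {(1,j'-1)}"
      have y0: "(1,j'-1) \<in> expl s n (r,j)" using hy by (intro F(2)) auto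
      show ?thesis using y0 hx hy ty Sj by (auto split: if_splits)
    next
      assume hy: "r' = 1 \<and> j' = 0 \<and> expl s n (r',j') = {}"
      show ?thesis using hx hy by simp
    next
      assume hy: "r' \<noteq> 1 \<and> colty s j' = 2 \<and> Suc j' < n \<and> expl s n (r',j') = {(r',Suc j')}"
      have y0: "(r',Suc j') \<in> expl s n (r,j)" using hy by (intro F(2)) auto
      show ?thesis using y0 hx hy ty Sj by (auto split: if_splits)
    qed
  next
    assume hx: "r \<noteq> 1 \<and> colty s j = 2 \<and> Suc j < n \<and> expl s n (r,j) = {(r,Suc j)}"
    show ?thesis using cy
    proof (elim disjE)
      assume hy: "r' = 1 \<and> colty s j' = 0 \<and> Suc j' < n \<and> expl s n (r',j') = {(0,j'),(2,j'),(1,Suc j')}"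
      have x0: "(r,Suc j) \<in> expl s n (r',j')" using hx by (intro F(1)) auto
      have y0: "(0,j') \<in> expl s n (r,j)" using hy by (intro F(2)) auto
      have y1: "(2,j') \<in> expl s n (r,j)" using hy by (intro F(2)) auto
      have y2: "(1,Suc j') \<in> expl s n (r,j)" using hy by (intro F(2)) auto
      show ?thesis using x0 y0 y1 y2 hx hy ty Sj by (auto split: if_splits)
    next
      assume hy: "r' = 1 \<and> colty s j' = 0 \<and> \<not> Suc j' < n \<and> expl s n (r',j') = {(0,j'),(2,j')}"
      have x0: "(r,Suc j) \<in> expl s n (r',j')" using hx by (intro F(1)) auto
      have y0: "(0,j') \<in> expl s n (r,j)" using hy by (intro F(2)) auto
      have y1: "(2,j') \<in> expl s n (r,j)" using hy by (intro F(2)) auto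
      show ?thesis using x0 y0 y1 hx hy ty Sj by (auto split: if_splits)
    next
      assume hy: "r' \<noteq> 1 \<and> colty s j' = 1 \<and> 0 < j' \<and> expl s n (r',j') = {(1,j'),(r',j'-1)}"
      have x0: "(r,Suc j) \<in> expl s n (r',j')" using hx by (intro F(1)) auto
      have y0: "(1,j') \<in> expl s n (r,j)" using hy by (intro F(2)) auto
      have y1: "(r',j'-1) \<in> expl s n (r,j)" using hy by (intro F(2)) auto
      show ?thesis using x0 y0 y1 hx hy ty Sj by (auto split: if_splits)
    next
      assume hy: "r' = 1 \<and> colty s j' = 2 \<and> 0 < j' \<and> expl s n (r',j') = {(1,j'-1)}"
      have x0: "(r,Suc j) \<in> expl s n (r',j')" using hx by (intro F(1)) auto
      have y0: "(1,j'-1) \<in> expl s n (r,j)" using hy by (intro F(2)) auto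
      show ?thesis using x0 y0 hx hy ty Sj by (auto split: if_splits)
    next
      assume hy: "r' = 1 \<and> j' = 0 \<and> expl s n (r',j') = {}"
      have x0: "(r,Suc j) \<in> expl s n (r',j')" using hx by (intro F(1)) auto
      show ?thesis using x0 hx hy ty Sj by (auto split: if_splits)
    next
      assume hy: "r' \<noteq> 1 \<and> colty s j' = 2 \<and> Suc j' < n \<and> expl s n (r',j') = {(r',Suc j')}"
      have x0: "(r,Suc j) \<in> expl s n (r',j')" using hx by (intro F(1)) auto
      have y0: "(r',Suc j') \<in> expl s n (r,j)" using hy by (intro F(2)) auto
      show ?thesis using x0 y0 hx hy ty Sj by (auto split: if_splits)
    qed
  qed
qed

lemma Aset_resolving:
  assumes hs: "(s = 0 \<and> n mod 3 = 1) \<or> (s = 2 \<and> n mod 3 \<noteq> 1)"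
  shows "adj_resolving (grid_V n) grid_E (Aset s n)"
  unfolding resolving_iff
proof (intro conjI ballI impI)
  show "Aset s n \<subseteq> grid_V n" by (auto simp: Aset_iff grid_V_iff)
next
  fix x y assume x: "x \<in> grid_V n" and y: "y \<in> grid_V n" and ne: "x \<noteq> y"
  show "\<exists>z\<in>Aset s n. cls grid_E z x \<noteq> cls grid_E z y"
  proof (cases "x \<in> Aset s n")
    case True thus ?thesis using ne by (intro bexI[of _ x]) (auto simp: cls_def)
  next
    case xf: False
    show ?thesis
    proof (cases "y \<in> Aset s n")
      case True thus ?thesis using ne by (intro bexI[of _ y]) (auto simp: cls_def)
    next
      case yf: False
      obtain r j where xx: "x = (r,j)" by (cases x)
      obtain r' j' where yy: "y = (r',j')" by (cases y)
      have fx: "(r,j) \<in> grid_V n - Aset s n" using x xf xx by auto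
      have fy: "(r',j') \<in> grid_V n - Aset s n" using y yf yy by auto
      have "expl s n (r,j) \<noteq> expl s n (r',j')" using expl_inj[OF hs fx fy] ne xx yy by auto
      hence "{z \<in> Aset s n. grid_E z (r,j)} \<noteq> {z \<in> Aset s n. grid_E z (r',j')}"
        using tr_expl[OF fx] tr_expl[OF fy] by simp
      then obtain z where z: "z \<in> Aset s n" "grid_E z x \<noteq> grid_E z y" using xx yy by blast
      have "z \<noteq> x" "z \<noteq> y" using z(1) xf yf by auto
      thus ?thesis using z by (intro bexI[of _ z]) (auto simp: cls_def)
    qed
  qed
qed

lemma m3a: "(j + 2) mod 3 = (0::nat) \<Longrightarrow> j mod 3 = 1"
  using mod_less_divisor[of 3 j] by (auto simp: mod_Suc numeral_2_eq_2 split: if_splits)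
lemma m3b: "(j + 2) mod 3 = (1::nat) \<Longrightarrow> j mod 3 = 2"
  using mod_less_divisor[of 3 j] by (auto simp: mod_Suc numeral_2_eq_2 split: if_splits)
lemma m3c: "j mod 3 = (1::nat) \<Longrightarrow> 0 < j \<Longrightarrow> (j - 1) mod 3 = 0"
  by (cases j) (auto simp: mod_Suc split: if_splits)
lemma m3d: "j mod 3 = (0::nat) \<Longrightarrow> 0 < j \<Longrightarrow> (j - 1) mod 3 = 2"
  using mod_less_divisor[of 3 "j - 1"] by (cases j) (auto simp: mod_Suc split: if_splits)

lemma card_Aset2: "card (Aset 2 n) \<le> n"
proof -
  let ?f = "\<lambda>(r::nat,j::nat). if r = 2 then j - 1 else j"
  have key: "?f (r,j) mod 3 = (r + 1) mod 3 \<and> r < 3 \<and> (r = 2 \<longrightarrow> 0 < j)" if "(r,j) \<in> Aset 2 n" for r j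
  proof -
    have h: "r < 3" "((j + 2) mod 3 = 0 \<and> r \<noteq> 1) \<or> ((j + 2) mod 3 = 1 \<and> r = 1)"
      using that unfolding Aset_iff colty_def by auto
    have rc: "r = 0 \<or> r = 1 \<or> r = 2" using h by auto
    thus ?thesis
    proof (elim disjE)
      assume r: "r = 0" thus ?thesis using h m3a[of j] by simp
    next
      assume r: "r = 1" thus ?thesis using h m3b[of j] by simp
    next
      assume r: "r = 2"
      have "j mod 3 = 1" using h r m3a[of j] by simp
      hence "0 < j" by (cases j) auto
      moreover have "(j - 1) mod 3 = 0" using m3c[of j] \<open>j mod 3 = 1\<close> \<open>0 < j\<close> by simp
      ultimately show ?thesis using r by simp
    qed
  qed
  have inj: "inj_on ?f (Aset 2 n)"
  proof (rule inj_onI)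
    fix u v assume u: "u \<in> Aset 2 n" and v: "v \<in> Aset 2 n" and e: "?f u = ?f v"
    obtain r j where uu: "u = (r,j)" by (cases u)
    obtain r' j' where vv: "v = (r',j')" by (cases v)
    have K1: "?f (r,j) mod 3 = (r + 1) mod 3 \<and> r < 3 \<and> (r = 2 \<longrightarrow> 0 < j)" by (rule key) (use u uu in simp)
    have K2: "?f (r',j') mod 3 = (r' + 1) mod 3 \<and> r' < 3 \<and> (r' = 2 \<longrightarrow> 0 < j')" by (rule key) (use v vv in simp)
    have k1: "?f (r,j) mod 3 = (r + 1) mod 3" "r < 3" "r = 2 \<longrightarrow> 0 < j" using K1 by blast+
    have k2: "?f (r',j') mod 3 = (r' + 1) mod 3" "r' < 3" "r' = 2 \<longrightarrow> 0 < j'" using K2 by blast+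
    have "(r + 1) mod 3 = (r' + 1) mod 3" using k1(1) k2(1) e uu vv by simp
    hence rr: "r = r'" using k1(2) k2(2) by (auto simp: mod_Suc split: if_splits)
    have "j = j'" using e uu vv rr k1(3) k2(3) by (auto split: if_splits)
    thus "u = v" using uu vv rr by simp
  qed
  have sub: "?f ` Aset 2 n \<subseteq> {0..<n}" by (auto simp: Aset_iff)
  from card_inj_on_le[OF inj sub] show ?thesis by simp
qed

lemma card_Aset0: "card (Aset 0 n) \<le> n + 1"
proof -
  let ?f = "\<lambda>(r::nat,j::nat). if r = 2 then (if j = 0 then n else j - 1) else j"
  have key: "(?f (r,j) < n \<longrightarrow> ?f (r,j) mod 3 = r) \<and> r < 3 \<and> (?f (r,j) = n \<longrightarrow> r = 2 \<and> j = 0) \<and> ?f (r,j) \<le> n" if "(r,j) \<in> Aset 0 n" for r j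
  proof -
    have h: "r < 3" "j < n" "(j mod 3 = 0 \<and> r \<noteq> 1) \<or> (j mod 3 = 1 \<and> r = 1)"
      using that unfolding Aset_iff colty_def by auto
    have rc: "r = 0 \<or> r = 1 \<or> r = 2" using h by auto
    thus ?thesis
    proof (elim disjE)
      assume r: "r = 0" thus ?thesis using h by simp
    next
      assume r: "r = 1" thus ?thesis using h by simp
    next
      assume r: "r = 2"
      show ?thesis
      proof (cases "j = 0")
        case True thus ?thesis using r by simp
      next
        case False
        have "j mod 3 = 0" using h r by simp
        hence "(j - 1) mod 3 = 2" using False m3d[of j] by simp
        thus ?thesis using r False h by (simp, arith)
      qed
    qed
  qed
  have inj: "inj_on ?f (Aset 0 n)"
  proof (rule inj_onI)
    fix u v assume u: "u \<in> Aset 0 n" and v: "v \<in> Aset 0 n" and e: "?f u = ?f v"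
    obtain r j where uu: "u = (r,j)" by (cases u)
    obtain r' j' where vv: "v = (r',j')" by (cases v)
    have K1: "(?f (r,j) < n \<longrightarrow> ?f (r,j) mod 3 = r) \<and> r < 3 \<and> (?f (r,j) = n \<longrightarrow> r = 2 \<and> j = 0) \<and> ?f (r,j) \<le> n"
      by (rule key) (use u uu in simp)
    have K2: "(?f (r',j') < n \<longrightarrow> ?f (r',j') mod 3 = r') \<and> r' < 3 \<and> (?f (r',j') = n \<longrightarrow> r' = 2 \<and> j' = 0) \<and> ?f (r',j') \<le> n"
      by (rule key) (use v vv in simp)
    have k1: "?f (r,j) < n \<longrightarrow> ?f (r,j) mod 3 = r" "r < 3" "?f (r,j) = n \<longrightarrow> r = 2 \<and> j = 0" "?f (r,j) \<le> n"
      using K1 by blast+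
    have k2: "?f (r',j') < n \<longrightarrow> ?f (r',j') mod 3 = r'" "r' < 3" "?f (r',j') = n \<longrightarrow> r' = 2 \<and> j' = 0" "?f (r',j') \<le> n"
      using K2 by blast+
    have fe: "?f (r,j) = ?f (r',j')" using e uu vv by simp
    show "u = v"
    proof (cases "?f (r,j) = n")
      case True
      have a1: "r = 2 \<and> j = 0" using k1(3) True by blast
      have "?f (r',j') = n" using True unfolding fe .
      hence a2: "r' = 2 \<and> j' = 0" using k2(3) by blast
      show ?thesis using a1 a2 uu vv by simp
    next
      case False
      have lt1: "?f (r,j) < n" using k1(4) False by (rule le_neq_trans)
      have lt2: "?f (r',j') < n" using lt1 unfolding fe .
      note lt = lt1 lt2
      have rr: "r = r'" using k1(1) k2(1) lt fe by simp
      have "j = j'" using fe rr lt by (auto split: if_splits)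
      thus ?thesis using uu vv rr by simp
    qed
  qed
  have sub: "?f ` Aset 0 n \<subseteq> {0..<n+1}" by (auto simp: Aset_iff)
  from card_inj_on_le[OF inj sub] show ?thesis by simp
qed

theorem theorem1p12:
  fixes n :: nat
  assumes "n \<ge> 1"
  shows "(n mod 3 = 1 \<longrightarrow> n \<le> adim (grid_V n) grid_E \<and> adim (grid_V n) grid_E \<le> n + 1) \<and>
         (n mod 3 \<noteq> 1 \<longrightarrow> n - 1 \<le> adim (grid_V n) grid_E \<and> adim (grid_V n) grid_E \<le> n)"
proof -
  define s where "s = (if n mod 3 = 1 then 0 else (2::nat))"
  have hs: "(s = 0 \<and> n mod 3 = 1) \<or> (s = 2 \<and> n mod 3 \<noteq> 1)" by (simp add: s_def)
  let ?P = "\<lambda>k. \<exists>A. adj_resolving (grid_V n) grid_E A \<and> card A = k"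
  have PA: "?P (card (Aset s n))" using Aset_resolving[OF hs] by blast
  have up: "adim (grid_V n) grid_E \<le> card (Aset s n)" unfolding adim_def by (rule Least_le[of ?P, OF PA])
  have "?P (adim (grid_V n) grid_E)" unfolding adim_def by (rule LeastI[of ?P, OF PA])
  then obtain A where A: "adj_resolving (grid_V n) grid_E A" "card A = adim (grid_V n) grid_E" by blast
  have low: "n \<le> adim (grid_V n) grid_E" using lower_card[OF A(1)] A(2) by simp
  have c: "card (Aset s n) \<le> (if n mod 3 = 1 then n + 1 else n)"
    using card_Aset0[of n] card_Aset2[of n] by (simp add: s_def)
  show ?thesis using low up c by (auto split: if_splits)
qed

end
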